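(* Let $A_i\in\mathbb{R}^{n\times n}$ ($i=1,\dots,q_A$), $B_j\in\mathbb{R}^{n\times n_f}$ ($j=1,\dots,q_B$), $C_k\in\mathbb{R}^{n_o\times n}$ ($k=1,\dots,q_C$), and $\hat A_i\in\mathbb{R}^{r\times r}$, $\hat B_j\in\mathbb{R}^{r\times n_f}$, $\hat C_k\in\mathbb{R}^{n_o\times r}$. Set \[ \mathbf{C}=\begin{bmatrix}C_1^{\mathrm T}&\cdots&C_{q_C}^{\mathrm T}\end{bmatrix}^{\mathrm T},\quad \hat{\mathbf{C}}=\begin{bmatrix}\hat C_1^{\mathrm T}&\cdots&\hat C_{q_C}^{\mathrm T}\end{bmatrix}^{\mathrm T},\quad \mathbf{B}=\begin{bmatrix}B_1&\cdots&B_{q_B}\end{bmatrix},\quad \hat{\mathbf{B}}=\begin{bmatrix}\hat B_1&\cdots&\hat B_{q_B}\end{bmatrix}. \] Assume $\mathbf{B}$ has full column rank and $\mathbf{C}$ has full row rank, with singular value decompositions \[ \mathbf{C}=U_{\mathbf{C}}\begin{bmatrix}\Sigma_{\mathbf{C}}&0\end{bmatrix}\begin{bmatrix}V_{\mathbf{C},1}&V_{\mathbf{C},2}\end{bmatrix}^{\mathrm T},\qquad \mathbf{B}=\begin{bmatrix}U_{\mathbf{B},1}&U_{\mathbf{B},2}\end{bmatrix}\begin{bmatrix}\Sigma_{\mathbf{B}}\\0\end{bmatrix}V_{\mathbf{B}}^{\mathrm T}, \] where $V_{\mathbf{C},2}\in\mathbb{R}^{n\times(n-q_Cn_o)}$ and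 $U_{\mathbf{B},2}\in\mathbb{R}^{n\times(n-q_Bn_f)}$. Let $V_1=V_{\mathbf{C},1}\Sigma_{\mathbf{C}}^{-1}U_{\mathbf{C}}^{\mathrm T}\hat{\mathbf{C}}$ and $W_1=U_{\mathbf{B},1}\Sigma_{\mathbf{B}}^{-1}V_{\mathbf{B}}^{\mathrm T}\hat{\mathbf{B}}^{\mathrm T}$. If there exists $Y\in\mathbb{R}^{(n-q_Bn_f)\times r}$ such that the matrix \[ \begin{bmatrix}(W_1+U_{\mathbf{B},2}Y)^{\mathrm T}A_1V_{\mathbf{C},2}\\ \vdots\\ (W_1+U_{\mathbf{B},2}Y)^{\mathrm T}A_{q_A}V_{\mathbf{C},2}\end{bmatrix}\in\mathbb{R}^{q_Ar\times(n-q_Cn_o)} \] has full row rank, then there exist $V,W\in\mathbb{R}^{n\times r}$ such that $\hat A_i=W^{\mathrm T}A_iV$ for $i=1,\dots,q_A$, $\hat B_j=W^{\mathrm T}B_j$ for $j=1,\dots,q_B$, and $\hat C_k=C_kV$ for $k=1,\dots,q_C$.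
   Context: In the singular value decompositions, $U_{\mathbf{C}}$, $[V_{\mathbf{C},1}\ V_{\mathbf{C},2}]$, $[U_{\mathbf{B},1}\ U_{\mathbf{B},2}]$, $V_{\mathbf{B}}$ are orthogonal matrices and $\Sigma_{\mathbf{C}}\in\mathbb{R}^{q_Cn_o\times q_Cn_o}$, $\Sigma_{\mathbf{B}}\in\mathbb{R}^{q_Bn_f\times q_Bn_f}$ are diagonal with positive diagonal entries. *)

theory Defs
  imports "Jordan_Normal_Form.DL_Rank"
begin

text \<open>Block column [F 0; F 1; ...; F (q-1)] of q blocks, each with m rows and c columns
  (blocks indexed from 0).\<close>
definition vstack :: "nat \<Rightarrow> nat \<Rightarrow> nat \<Rightarrow> (nat \<Rightarrow> real mat) \<Rightarrow> real mat" where
  "vstack q m c F = mat (q * m) c (\<lambda>(i, j). F (i div m) $$ (i mod m, j))"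

definition hstack :: "nat \<Rightarrow> nat \<Rightarrow> nat \<Rightarrow> (nat \<Rightarrow> real mat) \<Rightarrow> real mat" where
  "hstack q rr m F = mat rr (q * m) (\<lambda>(i, j). F (j div m) $$ (i, j mod m))"

definition hcat :: "real mat \<Rightarrow> real mat \<Rightarrow> real mat" where
  "hcat X Y = mat (dim_row X) (dim_col X + dim_col Y)
     (\<lambda>(i, j). if j < dim_col X then X $$ (i, j) else Y $$ (i, j - dim_col X))"

definition vcat :: "real mat \<Rightarrow> real mat \<Rightarrow> real mat" where
  "vcat X Y = mat (dim_row X + dim_row Y) (dim_col X)
     (\<lambda>(i, j). if i < dim_row X then X $$ (i, j) else Y $$ (i - dim_row X, j))"

definition orth :: "nat \<Rightarrow> real mat \<Rightarrow> bool" where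
  "orth k Q \<longleftrightarrow> Q \<in> carrier_mat k k \<and> transpose_mat Q * Q = 1\<^sub>m k \<and> Q * transpose_mat Q = 1\<^sub>m k"

definition pos_diag :: "nat \<Rightarrow> real mat \<Rightarrow> bool" where
  "pos_diag k S \<longleftrightarrow> S \<in> carrier_mat k k \<and> diagonal_mat S \<and> (\<forall>i<k. S $$ (i, i) > 0)"

definition diag_inv :: "real mat \<Rightarrow> real mat" where
  "diag_inv S = mat (dim_row S) (dim_col S) (\<lambda>(i, j). if i = j then 1 / S $$ (i, i) else 0)"

definition mrank :: "real mat \<Rightarrow> nat" where
  "mrank M = vec_space.rank (dim_row M) M"

end

theory Submission
  imports Defs
begin

lemma hcat_carrier[simp]: "X \<in> carrier_mat a b \<Longrightarrow> Y \<in> carrier_mat a c \<Longrightarrow> hcat X Y \<in> carrier_mat a (b+c)"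
  unfolding hcat_def by auto

lemma vcat_carrier[simp]: "P \<in> carrier_mat a c \<Longrightarrow> Q \<in> carrier_mat b c \<Longrightarrow> vcat P Q \<in> carrier_mat (a+b) c"
  unfolding vcat_def by auto

lemma mult_hcat_vcat:
  assumes X: "X \<in> carrier_mat a b" and Y: "Y \<in> carrier_mat a c"
    and P: "P \<in> carrier_mat b d" and Q: "Q \<in> carrier_mat c d"
  shows "hcat X Y * vcat P Q = X * P + Y * Q"
proof (rule eq_matI)
  fix i j assume i: "i < dim_row (X * P + Y * Q)" and j: "j < dim_col (X * P + Y * Q)"
  have ia: "i < a" and jd: "j < d" using i j X Y P Q by auto
  have r: "row (hcat X Y) i = row X i @\<^sub>v row Y i"
    by (rule eq_vecI) (use ia X Y in \<open>auto simp: hcat_def\<close>)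
  have cc: "col (vcat P Q) j = col P j @\<^sub>v col Q j"
    by (rule eq_vecI) (use jd P Q in \<open>auto simp: vcat_def\<close>)
  have "(hcat X Y * vcat P Q) $$ (i, j) = row (hcat X Y) i \<bullet> col (vcat P Q) j"
    using ia jd X Y P Q by (auto simp: hcat_def vcat_def)
  also have "\<dots> = row X i \<bullet> col P j + row Y i \<bullet> col Q j"
    unfolding r cc by (rule scalar_prod_append[of _ b _ c]) (use X Y P Q ia jd in auto)
  also have "\<dots> = (X * P + Y * Q) $$ (i, j)" using ia jd X Y P Q by auto
  finally show "(hcat X Y * vcat P Q) $$ (i, j) = (X * P + Y * Q) $$ (i, j)" .
qed (use X Y P Q in \<open>auto simp: hcat_def vcat_def\<close>)

lemma transpose_hcat:
  assumes X: "X \<in> carrier_mat a b" and Y: "Y \<in> carrier_mat a c"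
  shows "transpose_mat (hcat X Y) = vcat (transpose_mat X) (transpose_mat Y)"
  by (rule eq_matI) (use X Y in \<open>auto simp: hcat_def vcat_def\<close>)

lemma transpose_vcat:
  assumes X: "X \<in> carrier_mat a c" and Y: "Y \<in> carrier_mat b c"
  shows "transpose_mat (vcat X Y) = hcat (transpose_mat X) (transpose_mat Y)"
  by (rule eq_matI) (use X Y in \<open>auto simp: hcat_def vcat_def\<close>)

lemma orth_blocks:
  assumes X: "X \<in> carrier_mat n b" and Y: "Y \<in> carrier_mat n c" and bc: "b + c = n"
    and O: "orth n (hcat X Y)"
  shows "transpose_mat (hcat X Y) * X = vcat (1\<^sub>m b) (0\<^sub>m c b)"
    and "transpose_mat (hcat X Y) * Y = vcat (0\<^sub>m b c) (1\<^sub>m c)"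
    and "transpose_mat X * X = 1\<^sub>m b" and "transpose_mat X * Y = 0\<^sub>m b c"
    and "transpose_mat Y * X = 0\<^sub>m c b" and "transpose_mat Y * Y = 1\<^sub>m c"
proof -
  let ?H = "hcat X Y"
  let ?E1 = "vcat (1\<^sub>m b) (0\<^sub>m c b)" and ?E2 = "vcat (0\<^sub>m b c) (1\<^sub>m c)"
  have H: "?H \<in> carrier_mat n n" using X Y bc hcat_carrier by metis
  have E1: "?E1 \<in> carrier_mat n b" using bc vcat_carrier[of "1\<^sub>m b" b b "0\<^sub>m c b" c] by auto
  have E2: "?E2 \<in> carrier_mat n c" using bc vcat_carrier[of "0\<^sub>m b c" b c "1\<^sub>m c" c] by auto
  have HX: "?H * ?E1 = X" using mult_hcat_vcat[OF X Y, of "1\<^sub>m b" b "0\<^sub>m c b"] X Y by auto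
  have HY: "?H * ?E2 = Y" using mult_hcat_vcat[OF X Y, of "0\<^sub>m b c" c "1\<^sub>m c"] X Y by auto
  have HH: "transpose_mat ?H * ?H = 1\<^sub>m n" using O unfolding orth_def by auto
  have tH: "transpose_mat ?H \<in> carrier_mat n n" using H by simp
  have "transpose_mat ?H * (?H * ?E1) = (transpose_mat ?H * ?H) * ?E1"
    using assoc_mult_mat[OF tH H E1] by simp
  also have "\<dots> = ?E1" using HH E1 by simp
  finally show 1: "transpose_mat ?H * X = ?E1" unfolding HX .
  have "transpose_mat ?H * (?H * ?E2) = (transpose_mat ?H * ?H) * ?E2"
    using assoc_mult_mat[OF tH H E2] by simp
  also have "\<dots> = ?E2" using HH E2 by simp
  finally show 2: "transpose_mat ?H * Y = ?E2" unfolding HY .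
  have tX: "transpose_mat X = transpose_mat ?E1 * transpose_mat ?H"
    using HX transpose_mult[OF H E1] by simp
  have tY: "transpose_mat Y = transpose_mat ?E2 * transpose_mat ?H"
    using HY transpose_mult[OF H E2] by simp
  have tE1c: "transpose_mat ?E1 \<in> carrier_mat b n" using E1 by simp
  have tE2c: "transpose_mat ?E2 \<in> carrier_mat c n" using E2 by simp
  have tE1: "transpose_mat ?E1 = hcat (1\<^sub>m b) (0\<^sub>m b c)"
    using transpose_vcat[of "1\<^sub>m b" b b "0\<^sub>m c b" c] by simp
  have tE2: "transpose_mat ?E2 = hcat (0\<^sub>m c b) (1\<^sub>m c)"
    using transpose_vcat[of "0\<^sub>m b c" b c "1\<^sub>m c" c] by simp
  have m11: "transpose_mat ?E1 * ?E1 = 1\<^sub>m b"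
    unfolding tE1 using mult_hcat_vcat[of "1\<^sub>m b" b b "0\<^sub>m b c" c "1\<^sub>m b" b "0\<^sub>m c b"] by simp
  have m12: "transpose_mat ?E1 * ?E2 = 0\<^sub>m b c"
    unfolding tE1 using mult_hcat_vcat[of "1\<^sub>m b" b b "0\<^sub>m b c" c "0\<^sub>m b c" c "1\<^sub>m c"] by simp
  have m21: "transpose_mat ?E2 * ?E1 = 0\<^sub>m c b"
    unfolding tE2 using mult_hcat_vcat[of "0\<^sub>m c b" c b "1\<^sub>m c" c "1\<^sub>m b" b "0\<^sub>m c b"] by simp
  have m22: "transpose_mat ?E2 * ?E2 = 1\<^sub>m c"
    unfolding tE2 using mult_hcat_vcat[of "0\<^sub>m c b" c b "1\<^sub>m c" c "0\<^sub>m b c" c "1\<^sub>m c"] by simp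
  show "transpose_mat X * X = 1\<^sub>m b"
    unfolding tX using assoc_mult_mat[OF tE1c tH X] 1 m11 by simp
  show "transpose_mat X * Y = 0\<^sub>m b c"
    unfolding tX using assoc_mult_mat[OF tE1c tH Y] 2 m12 by simp
  show "transpose_mat Y * X = 0\<^sub>m c b"
    unfolding tY using assoc_mult_mat[OF tE2c tH X] 1 m21 by simp
  show "transpose_mat Y * Y = 1\<^sub>m c"
    unfolding tY using assoc_mult_mat[OF tE2c tH Y] 2 m22 by simp
qed

lemma vstack_carrier[simp]: "vstack q m c F \<in> carrier_mat (q*m) c"
  unfolding vstack_def by auto

lemma hstack_carrier[simp]: "hstack q rr m F \<in> carrier_mat rr (q*m)"
  unfolding hstack_def by auto

lemma divmod_lt: "i < q * (m::nat) \<Longrightarrow> i div m < q \<and> i mod m < m"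
  by (metis less_mult_imp_div_less mod_less_divisor mult_0_right mult.commute neq0_conv not_less_zero)

lemma vstack_mult:
  assumes F: "\<forall>k<q. F k \<in> carrier_mat m c" and Z: "Z \<in> carrier_mat c d"
  shows "vstack q m c F * Z = vstack q m d (\<lambda>k. F k * Z)"
proof (rule eq_matI)
  fix i j assume i: "i < dim_row (vstack q m d (\<lambda>k. F k * Z))"
    and j: "j < dim_col (vstack q m d (\<lambda>k. F k * Z))"
  have i': "i < q*m" and jd: "j < d" using i j by (auto simp: vstack_def)
  from divmod_lt[OF i'] have dm: "i div m < q" "i mod m < m" by auto
  have Fi: "F (i div m) \<in> carrier_mat m c" using F dm by auto
  have "row (vstack q m c F) i = row (F (i div m)) (i mod m)"
    by (rule eq_vecI) (use i' Fi dm in \<open>auto simp: vstack_def\<close>)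
  then show "(vstack q m c F * Z) $$ (i, j) = vstack q m d (\<lambda>k. F k * Z) $$ (i, j)"
    using i' jd Fi Z dm by (auto simp: vstack_def)
qed (use Z in \<open>auto simp: vstack_def\<close>)

lemma mult_hstack:
  assumes F: "\<forall>k<q. F k \<in> carrier_mat n m" and W: "W \<in> carrier_mat rr n"
  shows "W * hstack q n m F = hstack q rr m (\<lambda>k. W * F k)"
proof (rule eq_matI)
  fix i j assume i: "i < dim_row (hstack q rr m (\<lambda>k. W * F k))"
    and j: "j < dim_col (hstack q rr m (\<lambda>k. W * F k))"
  have j': "j < q*m" and ir: "i < rr" using i j by (auto simp: hstack_def)
  from divmod_lt[OF j'] have dm: "j div m < q" "j mod m < m" by auto
  have Fi: "F (j div m) \<in> carrier_mat n m" using F dm by auto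
  have "col (hstack q n m F) j = col (F (j div m)) (j mod m)"
    by (rule eq_vecI) (use j' Fi dm in \<open>auto simp: hstack_def\<close>)
  then show "(W * hstack q n m F) $$ (i, j) = hstack q rr m (\<lambda>k. W * F k) $$ (i, j)"
    using j' ir Fi W dm by (auto simp: hstack_def)
qed (use W in \<open>auto simp: hstack_def\<close>)

lemma vstack_eqD:
  assumes "vstack q m c F = vstack q m c G" and k: "k < q"
    and "F k \<in> carrier_mat m c" and "G k \<in> carrier_mat m c"
  shows "F k = G k"
proof (rule eq_matI)
  fix i j assume i: "i < dim_row (G k)" and j: "j < dim_col (G k)"
  have im: "i < m" "j < c" using i j assms by auto
  have lt: "k * m + i < q * m"
  proof -
    have "k * m + i < k * m + m" using im by simp
    also have "\<dots> = Suc k * m" by simp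
    also have "\<dots> \<le> q * m" using k by (intro mult_right_mono) auto
    finally show ?thesis .
  qed
  have d: "(k * m + i) div m = k" "(k * m + i) mod m = i" using im by auto
  from arg_cong[OF assms(1), of "\<lambda>M. M $$ (k*m+i, j)"]
  show "F k $$ (i, j) = G k $$ (i, j)" using lt im d by (simp add: vstack_def)
qed (use assms in auto)

lemma hstack_eqD:
  assumes "hstack q rr m F = hstack q rr m G" and k: "k < q"
    and "F k \<in> carrier_mat rr m" and "G k \<in> carrier_mat rr m"
  shows "F k = G k"
proof (rule eq_matI)
  fix i j assume i: "i < dim_row (G k)" and j: "j < dim_col (G k)"
  have im: "i < rr" "j < m" using i j assms by auto
  have lt: "k * m + j < q * m"
  proof -
    have "k * m + j < k * m + m" using im by simp
    also have "\<dots> = Suc k * m" by simp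
    also have "\<dots> \<le> q * m" using k by (intro mult_right_mono) auto
    finally show ?thesis .
  qed
  have d: "(k * m + j) div m = k" "(k * m + j) mod m = j" using im by auto
  from arg_cong[OF assms(1), of "\<lambda>M. M $$ (i, k*m+j)"]
  show "F k $$ (i, j) = G k $$ (i, j)" using lt im d by (simp add: hstack_def)
qed (use assms in auto)

lemma vstack_zero: "0\<^sub>m (q*m) c = vstack q m c (\<lambda>_. 0\<^sub>m m c)"
proof (rule eq_matI)
  fix i j assume "i < dim_row (vstack q m c (\<lambda>_. 0\<^sub>m m c))" "j < dim_col (vstack q m c (\<lambda>_. 0\<^sub>m m c))"
  then show "0\<^sub>m (q*m) c $$ (i, j) = vstack q m c (\<lambda>_. 0\<^sub>m m c) $$ (i, j)"
    using divmod_lt[of i q m] by (auto simp: vstack_def)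
qed (auto simp: vstack_def)

lemma diag_inv_carrier[simp]: "pos_diag k S \<Longrightarrow> diag_inv S \<in> carrier_mat k k"
  unfolding pos_diag_def diag_inv_def by auto

lemma diag_inv_transpose: "pos_diag k S \<Longrightarrow> transpose_mat (diag_inv S) = diag_inv S"
  unfolding pos_diag_def diag_inv_def by (rule eq_matI) auto

lemma diag_inv_right: assumes S: "pos_diag k S" shows "S * diag_inv S = 1\<^sub>m k"
proof (rule eq_matI)
  fix i j assume i: "i < dim_row (1\<^sub>m k)" and j: "j < dim_col (1\<^sub>m k)"
  have Sc: "S \<in> carrier_mat k k" and dg: "diagonal_mat S" and p: "\<forall>i<k. S $$ (i, i) > 0"
    using S unfolding pos_diag_def by auto
  have ik: "i < k" "j < k" using i j by auto
  have "(S * diag_inv S) $$ (i, j) = (\<Sum>l\<in>{0..<k}. S $$ (i, l) * diag_inv S $$ (l, j))"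
    using Sc ik by (auto simp: scalar_prod_def diag_inv_def)
  also have "\<dots> = (\<Sum>l\<in>{0..<k}. if l = i then S $$ (i, i) * diag_inv S $$ (i, j) else 0)"
    by (rule sum.cong) (use dg Sc ik in \<open>auto simp: diagonal_mat_def\<close>)
  also have "\<dots> = S $$ (i, i) * diag_inv S $$ (i, j)" using ik by simp
  also have "\<dots> = 1\<^sub>m k $$ (i, j)" using ik p Sc by (auto simp: diag_inv_def)
  finally show "(S * diag_inv S) $$ (i, j) = 1\<^sub>m k $$ (i, j)" .
qed (use S in \<open>auto simp: pos_diag_def diag_inv_def\<close>)

lemma diag_inv_left: assumes S: "pos_diag k S" shows "diag_inv S * S = 1\<^sub>m k"
proof (rule eq_matI)
  fix i j assume i: "i < dim_row (1\<^sub>m k)" and j: "j < dim_col (1\<^sub>m k)"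
  have Sc: "S \<in> carrier_mat k k" and dg: "diagonal_mat S" and p: "\<forall>i<k. S $$ (i, i) > 0"
    using S unfolding pos_diag_def by auto
  have ik: "i < k" "j < k" using i j by auto
  have "(diag_inv S * S) $$ (i, j) = (\<Sum>l\<in>{0..<k}. diag_inv S $$ (i, l) * S $$ (l, j))"
    using Sc ik by (auto simp: scalar_prod_def diag_inv_def)
  also have "\<dots> = (\<Sum>l\<in>{0..<k}. if l = i then diag_inv S $$ (i, i) * S $$ (i, j) else 0)"
    by (rule sum.cong) (use dg Sc ik in \<open>auto simp: diag_inv_def\<close>)
  also have "\<dots> = diag_inv S $$ (i, i) * S $$ (i, j)" using ik by simp
  also have "\<dots> = 1\<^sub>m k $$ (i, j)" using ik p Sc dg by (auto simp: diag_inv_def diagonal_mat_def)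
  finally show "(diag_inv S * S) $$ (i, j) = 1\<^sub>m k $$ (i, j)" .
qed (use S in \<open>auto simp: pos_diag_def diag_inv_def\<close>)

lemma (in vec_space) full_rank_surj:
  assumes A: "A \<in> carrier_mat n nc" and r: "rank A = n" and b: "b \<in> carrier_vec n"
  shows "\<exists>z \<in> carrier_vec nc. A *\<^sub>v z = b"
proof -
  have e: "lin_indpt {}" by (simp add: lin_dep_def)
  obtain S where max: "maximal S (\<lambda>T. T \<subseteq> set (cols A) \<and> lin_indpt T)" and fin: "finite S"
    using maximal_exists_superset[of "set (cols A)" "\<lambda>T. T \<subseteq> set (cols A) \<and> lin_indpt T" "{}"] e
    by auto
  have S: "S \<subseteq> set (cols A)" "lin_indpt S" using max unfolding maximal_def by auto
  have card: "card S = n" using rank_card_indpt[OF A max] r by simp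
  have Scar: "S \<subseteq> carrier_vec n" using S cols_dim[of A] A by auto
  have "basis S"
    by (rule dim_li_is_basis) (use fin Scar S card dim_is_n fin_dim in auto)
  then have "span S = carrier_vec n" unfolding basis_def by simp
  moreover have "span S \<subseteq> span (set (cols A))" using span_is_monotone S(1) by auto
  ultimately have "b \<in> span (set (cols A))" using b by auto
  also have "span (set (cols A)) = span_list (cols A)"
    using idom_vec.span_list_as_span[of "cols A" n] cols_dim A by auto
  finally obtain c where "b = lincomb_list c (cols A)" unfolding span_list_def by auto
  also have "\<dots> = mat_of_cols n (cols A) *\<^sub>v vec (length (cols A)) c"
    using lincomb_list_as_mat_mult[of "cols A"] A cols_dim[of A] by (auto simp: carrier_vecD subset_iff)
  also have "\<dots> = A *\<^sub>v vec nc c" using A by auto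
  finally show ?thesis by force
qed

lemmas carr = mult_carrier_mat add_carrier_mat transpose_carrier_mat[THEN iffD2] minus_carrier_mat

lemma full_rank_solve_mat:
  fixes M :: "real mat"
  assumes M: "M \<in> carrier_mat p m" and rk: "mrank M = p" and R: "R \<in> carrier_mat p r"
  shows "\<exists>Z \<in> carrier_mat m r. M * Z = R"
proof -
  have rk': "vec_space.rank p M = p" using rk M unfolding mrank_def by simp
  have "\<forall>j. \<exists>z. j < r \<longrightarrow> z \<in> carrier_vec m \<and> M *\<^sub>v z = col R j"
  proof (intro allI)
    fix j show "\<exists>z. j < r \<longrightarrow> z \<in> carrier_vec m \<and> M *\<^sub>v z = col R j"
    proof (cases "j < r")
      case True
      have "col R j \<in> carrier_vec p" using R True by auto
      then show ?thesis using vec_space.full_rank_surj[OF M rk'] by blast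
    qed auto
  qed
  then obtain f where f: "\<And>j. j < r \<Longrightarrow> f j \<in> carrier_vec m \<and> M *\<^sub>v f j = col R j"
    by metis
  define Z where "Z = mat m r (\<lambda>(a, j). f j $ a)"
  have Z: "Z \<in> carrier_mat m r" unfolding Z_def by simp
  have colZ: "col Z j = f j" if "j < r" for j
    using f[OF that] that unfolding Z_def by (intro eq_vecI) auto
  have "M * Z = R"
  proof (rule eq_matI)
    fix i j assume "i < dim_row R" "j < dim_col R"
    then have ij: "i < p" "j < r" using R by auto
    have "(M * Z) $$ (i, j) = row M i \<bullet> col Z j" using ij M Z by simp
    also have "\<dots> = (M *\<^sub>v f j) $ i" using colZ ij M by simp
    also have "\<dots> = R $$ (i, j)" using f ij R by simp
    finally show "(M * Z) $$ (i, j) = R $$ (i, j)" .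
  qed (use M Z R in auto)
  with Z show ?thesis by blast
qed

lemma cancel1: "A \<in> carrier_mat a b \<Longrightarrow> B \<in> carrier_mat b a \<Longrightarrow> A * B = 1\<^sub>m a \<Longrightarrow> X \<in> carrier_mat a c
   \<Longrightarrow> A * (B * X) = (X :: real mat)"
  using assoc_mult_mat[of A a b B a X c] by simp

lemma cancel0: "A \<in> carrier_mat a b \<Longrightarrow> B \<in> carrier_mat b e \<Longrightarrow> A * B = 0\<^sub>m a e \<Longrightarrow> X \<in> carrier_mat e c
   \<Longrightarrow> A * (B * X) = (0\<^sub>m a c :: real mat)"
  using assoc_mult_mat[of A a b B e X c] by simp

lemma add_minus_cancel_mat: "X \<in> carrier_mat a b \<Longrightarrow> Y \<in> carrier_mat a b \<Longrightarrow> X + (Y - X) = (Y :: real mat)"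
  by (rule eq_matI) auto

theorem theorem2:
  fixes n nf no r qA qB qC :: nat
    and A Ah B Bh C Ch :: "nat \<Rightarrow> real mat"
    and UC SC VC1 VC2 UB1 UB2 SB VB :: "real mat"
  assumes A: "\<forall>i<qA. A i \<in> carrier_mat n n \<and> Ah i \<in> carrier_mat r r"
    and B: "\<forall>j<qB. B j \<in> carrier_mat n nf \<and> Bh j \<in> carrier_mat r nf"
    and C: "\<forall>k<qC. C k \<in> carrier_mat no n \<and> Ch k \<in> carrier_mat no r"
    and Bfull: "mrank (hstack qB n nf B) = qB * nf"
    and Cfull: "mrank (vstack qC no n C) = qC * no"
    and UC: "orth (qC * no) UC"
    and SC: "pos_diag (qC * no) SC"
    and VC1: "VC1 \<in> carrier_mat n (qC * no)"
    and VC2: "VC2 \<in> carrier_mat n (n - qC * no)"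
    and VC: "orth n (hcat VC1 VC2)"
    and Csvd: "vstack qC no n C
       = UC * hcat SC (0\<^sub>m (qC * no) (n - qC * no)) * transpose_mat (hcat VC1 VC2)"
    and UB1: "UB1 \<in> carrier_mat n (qB * nf)"
    and UB2: "UB2 \<in> carrier_mat n (n - qB * nf)"
    and UB: "orth n (hcat UB1 UB2)"
    and SB: "pos_diag (qB * nf) SB"
    and VB: "orth (qB * nf) VB"
    and Bsvd: "hstack qB n nf B
       = hcat UB1 UB2 * vcat SB (0\<^sub>m (n - qB * nf) (qB * nf)) * transpose_mat VB"
    and Y: "\<exists>Y \<in> carrier_mat (n - qB * nf) r.
       (let V1 = VC1 * diag_inv SC * transpose_mat UC * vstack qC no r Ch;
            W1 = UB1 * diag_inv SB * transpose_mat VB * transpose_mat (hstack qB r nf Bh)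
        in mrank (vstack qA r (n - qC * no)
                   (\<lambda>i. transpose_mat (W1 + UB2 * Y) * A i * VC2)) = qA * r)"
  shows "\<exists>V \<in> carrier_mat n r. \<exists>W \<in> carrier_mat n r.
           (\<forall>i<qA. Ah i = transpose_mat W * A i * V)
         \<and> (\<forall>j<qB. Bh j = transpose_mat W * B j)
         \<and> (\<forall>k<qC. Ch k = C k * V)"
proof -
  define k where "k = qC * no"
  define m where "m = n - qC * no"
  define kb where "kb = qB * nf"
  define mb where "mb = n - qB * nf"
  have VC1': "VC1 \<in> carrier_mat n k" using VC1 k_def by simp
  have VC2': "VC2 \<in> carrier_mat n m" using VC2 m_def by simp
  have UB1': "UB1 \<in> carrier_mat n kb" using UB1 kb_def by simp
  have UB2': "UB2 \<in> carrier_mat n mb" using UB2 mb_def by simp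
  have km: "k + m = n"
    using VC hcat_carrier[OF VC1' VC2'] unfolding orth_def by auto
  have kbm: "kb + mb = n"
    using UB hcat_carrier[OF UB1' UB2'] unfolding orth_def by auto
  have UCc: "UC \<in> carrier_mat k k" and UCt: "UC * transpose_mat UC = 1\<^sub>m k"
    using UC k_def unfolding orth_def by auto
  have VBc: "VB \<in> carrier_mat kb kb" and VBt: "VB * transpose_mat VB = 1\<^sub>m kb"
    using VB kb_def unfolding orth_def by auto
  have SCc: "SC \<in> carrier_mat k k" using SC k_def unfolding pos_diag_def by auto
  have SBc: "SB \<in> carrier_mat kb kb" using SB kb_def unfolding pos_diag_def by auto
  have SCi: "diag_inv SC \<in> carrier_mat k k" using SC k_def by simp
  have SBi: "diag_inv SB \<in> carrier_mat kb kb" using SB kb_def by simp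
  have SCr: "SC * diag_inv SC = 1\<^sub>m k" using diag_inv_right[OF SC] k_def by simp
  have SBl: "diag_inv SB * SB = 1\<^sub>m kb" using diag_inv_left[OF SB] kb_def by simp
  have SBt: "transpose_mat (diag_inv SB) = diag_inv SB" using diag_inv_transpose[OF SB] .
  note obC = orth_blocks[OF VC1' VC2' km VC[folded k_def]]
  note obB = orth_blocks[OF UB1' UB2' kbm UB[folded kb_def]]
  define Cs where "Cs = vstack qC no n C"
  define Chs where "Chs = vstack qC no r Ch"
  define Bs where "Bs = hstack qB n nf B"
  define Bhs where "Bhs = hstack qB r nf Bh"
  have Csc: "Cs \<in> carrier_mat k n" unfolding Cs_def k_def by simp
  have Chsc: "Chs \<in> carrier_mat k r" unfolding Chs_def k_def by simp
  have Bsc: "Bs \<in> carrier_mat n kb" unfolding Bs_def kb_def by simp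
  have Bhsc: "Bhs \<in> carrier_mat r kb" unfolding Bhs_def kb_def by simp
  define H where "H = hcat VC1 VC2"
  have Hc: "H \<in> carrier_mat n n" unfolding H_def using hcat_carrier[OF VC1' VC2'] km by simp
  have Z0: "hcat SC (0\<^sub>m k m) \<in> carrier_mat k n" using hcat_carrier[OF SCc, of "0\<^sub>m k m" m] km by simp
  have Csvd': "Cs = UC * hcat SC (0\<^sub>m k m) * transpose_mat H"
    using Csvd unfolding Cs_def H_def k_def m_def .
  have tH: "transpose_mat H \<in> carrier_mat n n" using Hc by simp
  have ZH: "hcat SC (0\<^sub>m k m) * transpose_mat H \<in> carrier_mat k n" using Z0 Hc by (blast intro: carr)
  have CsVC1: "Cs * VC1 = UC * SC"
  proof -
    have "Cs * VC1 = UC * (hcat SC (0\<^sub>m k m) * (transpose_mat H * VC1))"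
      unfolding Csvd' by (simp only: assoc_mult_mat[OF UCc Z0 tH] assoc_mult_mat[OF UCc ZH VC1'] assoc_mult_mat[OF Z0 tH VC1'])
    also have "\<dots> = UC * (SC * 1\<^sub>m k + 0\<^sub>m k m * 0\<^sub>m m k)"
      using obC(1) mult_hcat_vcat[OF SCc, of "0\<^sub>m k m" m "1\<^sub>m k" k "0\<^sub>m m k"] unfolding H_def by simp
    also have "\<dots> = UC * SC" using SCc by simp
    finally show ?thesis .
  qed
  have CsVC2: "Cs * VC2 = 0\<^sub>m k m"
  proof -
    have "Cs * VC2 = UC * (hcat SC (0\<^sub>m k m) * (transpose_mat H * VC2))"
      unfolding Csvd' by (simp only: assoc_mult_mat[OF UCc Z0 tH] assoc_mult_mat[OF UCc ZH VC2'] assoc_mult_mat[OF Z0 tH VC2'])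
    also have "\<dots> = UC * (SC * 0\<^sub>m k m + 0\<^sub>m k m * 1\<^sub>m m)"
      using obC(2) mult_hcat_vcat[OF SCc, of "0\<^sub>m k m" m "0\<^sub>m k m" m "1\<^sub>m m"] unfolding H_def by simp
    also have "\<dots> = 0\<^sub>m k m" using SCc UCc by simp
    finally show ?thesis .
  qed
  define V1 where "V1 = VC1 * diag_inv SC * transpose_mat UC * Chs"
  have V1c: "V1 \<in> carrier_mat n r" unfolding V1_def using VC1' SCi UCc Chsc by (blast intro: carr)
  have tUC: "transpose_mat UC \<in> carrier_mat k k" using UCc by simp
  have CsV1: "Cs * V1 = Chs"
  proof -
    have a1: "VC1 * diag_inv SC \<in> carrier_mat n k" using VC1' SCi by (blast intro: carr)
    have a2: "transpose_mat UC * Chs \<in> carrier_mat k r" using tUC Chsc by (blast intro: carr)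
    have a3: "diag_inv SC * (transpose_mat UC * Chs) \<in> carrier_mat k r" using SCi a2 by (blast intro: carr)
    have V1': "V1 = VC1 * (diag_inv SC * (transpose_mat UC * Chs))"
      unfolding V1_def by (simp only: assoc_mult_mat[OF a1 tUC Chsc] assoc_mult_mat[OF VC1' SCi a2])
    have "Cs * V1 = (Cs * VC1) * (diag_inv SC * (transpose_mat UC * Chs))"
      by (simp only: V1' assoc_mult_mat[OF Csc VC1' a3])
    also have "\<dots> = UC * (SC * (diag_inv SC * (transpose_mat UC * Chs)))"
      by (simp only: CsVC1 assoc_mult_mat[OF UCc SCc a3])
    also have "\<dots> = UC * (transpose_mat UC * Chs)"
      by (simp only: cancel1[OF SCc SCi SCr a2])
    also have "\<dots> = Chs" by (rule cancel1[OF UCc tUC UCt Chsc])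
    finally show ?thesis .
  qed
  define HB where "HB = hcat UB1 UB2"
  have Bsvd': "Bs = UB1 * SB * transpose_mat VB"
  proof -
    have "Bs = HB * vcat SB (0\<^sub>m mb kb) * transpose_mat VB"
      using Bsvd unfolding Bs_def HB_def kb_def mb_def .
    also have "HB * vcat SB (0\<^sub>m mb kb) = UB1 * SB + UB2 * 0\<^sub>m mb kb"
      unfolding HB_def by (rule mult_hcat_vcat[OF UB1' UB2' SBc]) simp
    also have "\<dots> = UB1 * SB" using UB1' UB2' SBc by simp
    finally show ?thesis .
  qed
  obtain Y where Yc: "Y \<in> carrier_mat mb r" and
    rk: "mrank (vstack qA r m (\<lambda>i. transpose_mat
          (UB1 * diag_inv SB * transpose_mat VB * transpose_mat Bhs + UB2 * Y) * A i * VC2)) = qA * r"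
    using Y unfolding Let_def Chs_def Bhs_def mb_def m_def by blast
  define W1 where "W1 = UB1 * diag_inv SB * transpose_mat VB * transpose_mat Bhs"
  define W where "W = W1 + UB2 * Y"
  have W1c: "W1 \<in> carrier_mat n r" unfolding W1_def using UB1' SBi VBc Bhsc by (blast intro: carr)
  have Wc: "W \<in> carrier_mat n r" unfolding W_def using W1c UB2' Yc by (blast intro: carr)
  have tBhs: "transpose_mat Bhs \<in> carrier_mat kb r" using Bhsc by simp
  have tVB: "transpose_mat VB \<in> carrier_mat kb kb" using VBc by simp
  have tUB1: "transpose_mat UB1 \<in> carrier_mat kb n" using UB1' by simp
  have tUB2: "transpose_mat UB2 \<in> carrier_mat mb n" using UB2' by simp
  have tY: "transpose_mat Y \<in> carrier_mat r mb" using Yc by simp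
  have P1c: "UB1 * diag_inv SB \<in> carrier_mat n kb" using UB1' SBi by (blast intro: carr)
  have P2c: "UB1 * diag_inv SB * transpose_mat VB \<in> carrier_mat n kb" using P1c tVB by (blast intro: carr)
  have W1t: "transpose_mat W1 = Bhs * (VB * (diag_inv SB * transpose_mat UB1))"
    unfolding W1_def
    by (simp only: transpose_mult[OF P2c tBhs] transpose_mult[OF P1c tVB] transpose_mult[OF UB1' SBi]
        SBt transpose_transpose)
  have Wt: "transpose_mat W = transpose_mat W1 + transpose_mat Y * transpose_mat UB2"
  proof -
    have "UB2 * Y \<in> carrier_mat n r" using UB2' Yc by (blast intro: carr)
    then show ?thesis unfolding W_def
      by (simp only: transpose_add[OF W1c] transpose_mult[OF UB2' Yc])
  qed
  have USB: "UB1 * SB \<in> carrier_mat n kb" using UB1' SBc by (blast intro: carr)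
  have Bs': "Bs = (UB1 * SB) * transpose_mat VB" using Bsvd' .
  have SBV: "SB * transpose_mat VB \<in> carrier_mat kb kb" using SBc tVB by (blast intro: carr)
  have G1: "transpose_mat UB1 * Bs = SB * transpose_mat VB"
  proof -
    have "transpose_mat UB1 * Bs = transpose_mat UB1 * (UB1 * (SB * transpose_mat VB))"
      by (simp only: Bs' assoc_mult_mat[OF UB1' SBc tVB])
    also have "\<dots> = SB * transpose_mat VB" by (rule cancel1[OF tUB1 UB1' obB(3) SBV])
    finally show ?thesis .
  qed
  have G2: "transpose_mat UB2 * Bs = 0\<^sub>m mb kb"
  proof -
    have "transpose_mat UB2 * Bs = transpose_mat UB2 * (UB1 * (SB * transpose_mat VB))"
      by (simp only: Bs' assoc_mult_mat[OF UB1' SBc tVB])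
    also have "\<dots> = 0\<^sub>m mb kb" by (rule cancel0[OF tUB2 UB1' obB(5) SBV])
    finally show ?thesis .
  qed
  have SU: "diag_inv SB * transpose_mat UB1 \<in> carrier_mat kb n" using SBi tUB1 by (blast intro: carr)
  have Q: "VB * (diag_inv SB * transpose_mat UB1) \<in> carrier_mat kb n" using VBc SU by (blast intro: carr)
  have G3: "(diag_inv SB * transpose_mat UB1) * Bs = transpose_mat VB"
    by (simp only: assoc_mult_mat[OF SBi tUB1 Bsc] G1 cancel1[OF SBi SBc SBl tVB])
  have G4: "(VB * (diag_inv SB * transpose_mat UB1)) * Bs = 1\<^sub>m kb"
    by (simp only: assoc_mult_mat[OF VBc SU Bsc] G3 VBt)
  have WBs: "transpose_mat W * Bs = Bhs"
  proof -
    have tW1c: "transpose_mat W1 \<in> carrier_mat r n" using W1c by simp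
    have tYc: "transpose_mat Y * transpose_mat UB2 \<in> carrier_mat r n" using tY tUB2 by (blast intro: carr)
    have "transpose_mat W * Bs = transpose_mat W1 * Bs + (transpose_mat Y * transpose_mat UB2) * Bs"
      unfolding Wt by (rule add_mult_distrib_mat[OF tW1c tYc Bsc])
    also have "transpose_mat W1 * Bs = Bhs"
      unfolding W1t using assoc_mult_mat[OF Bhsc Q Bsc] G4 Bhsc by simp
    also have "(transpose_mat Y * transpose_mat UB2) * Bs = 0\<^sub>m r kb"
      using assoc_mult_mat[OF tY tUB2 Bsc] G2 tY by simp
    finally show ?thesis using Bhsc by simp
  qed
  have Bpart: "\<forall>j<qB. Bh j = transpose_mat W * B j"
  proof (intro allI impI)
    fix j assume j: "j < qB"
    have "hstack qB r nf (\<lambda>j. transpose_mat W * B j) = hstack qB r nf Bh"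
      using WBs mult_hstack[of qB B n nf "transpose_mat W" r] B Wc unfolding Bs_def Bhs_def by simp
    from hstack_eqD[OF this j] show "Bh j = transpose_mat W * B j" using B j Wc by simp
  qed
  define M where "M = vstack qA r m (\<lambda>i. transpose_mat W * A i * VC2)"
  define R where "R = vstack qA r r (\<lambda>i. Ah i - transpose_mat W * A i * V1)"
  have Mc: "M \<in> carrier_mat (qA * r) m" unfolding M_def by simp
  have Mrk: "mrank M = qA * r" using rk unfolding M_def W_def W1_def .
  have Rc: "R \<in> carrier_mat (qA * r) r" unfolding R_def by simp
  obtain Z where Zc: "Z \<in> carrier_mat m r" and MZ: "M * Z = R"
    using full_rank_solve_mat[OF Mc Mrk Rc] by blast
  have Ablk: "transpose_mat W * A i * VC2 * Z = Ah i - transpose_mat W * A i * V1" if i: "i < qA" for i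
  proof -
    have "M * Z = vstack qA r r (\<lambda>i. transpose_mat W * A i * VC2 * Z)"
      unfolding M_def by (rule vstack_mult) (use A Wc VC2' Zc in auto)
    then have eqv: "vstack qA r r (\<lambda>i. transpose_mat W * A i * VC2 * Z) = R" using MZ by simp
    have Ai: "A i \<in> carrier_mat n n" "Ah i \<in> carrier_mat r r" using A i by auto
    have c1: "transpose_mat W * A i * VC2 * Z \<in> carrier_mat r r"
      using Ai Wc VC2' Zc by (blast intro: carr)
    have c2: "Ah i - transpose_mat W * A i * V1 \<in> carrier_mat r r"
      using Ai Wc V1c by (blast intro: carr)
    from vstack_eqD[OF eqv[unfolded R_def] i c1 c2] show ?thesis .
  qed
  define V where "V = V1 + VC2 * Z"
  have Vc: "V \<in> carrier_mat n r" unfolding V_def using V1c VC2' Zc by (blast intro: carr)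
  have Apart: "\<forall>i<qA. Ah i = transpose_mat W * A i * V"
  proof (intro allI impI)
    fix i assume i: "i < qA"
    have Ai: "A i \<in> carrier_mat n n" "Ah i \<in> carrier_mat r r" using A i by auto
    have WA: "transpose_mat W * A i \<in> carrier_mat r n" using Ai Wc by (blast intro: carr)
    have VZ: "VC2 * Z \<in> carrier_mat n r" using VC2' Zc by (blast intro: carr)
    have WAV: "transpose_mat W * A i * V1 \<in> carrier_mat r r" using WA V1c by (blast intro: carr)
    have "transpose_mat W * A i * V = transpose_mat W * A i * V1 + transpose_mat W * A i * (VC2 * Z)"
      unfolding V_def by (rule mult_add_distrib_mat[OF WA V1c VZ])
    also have "transpose_mat W * A i * (VC2 * Z) = transpose_mat W * A i * VC2 * Z"
      by (rule assoc_mult_mat[OF WA VC2' Zc, symmetric])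
    also have "transpose_mat W * A i * V1 + (transpose_mat W * A i * VC2 * Z) = Ah i"
      unfolding Ablk[OF i] by (rule add_minus_cancel_mat[OF WAV Ai(2)])
    finally show "Ah i = transpose_mat W * A i * V" by simp
  qed
  have Cpart: "\<forall>j<qC. Ch j = C j * V"
  proof (intro allI impI)
    fix j assume j: "j < qC"
    have Cj: "C j \<in> carrier_mat no n" "Ch j \<in> carrier_mat no r" using C j by auto
    have "vstack qC no r (\<lambda>j. C j * V1) = vstack qC no r Ch"
      using CsV1 vstack_mult[of qC C no n V1 r] C V1c unfolding Cs_def Chs_def by simp
    from vstack_eqD[OF this j] have c1: "C j * V1 = Ch j" using Cj V1c by simp
    have "vstack qC no m (\<lambda>j. C j * VC2) = vstack qC no m (\<lambda>_. 0\<^sub>m no m)"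
      using CsVC2 vstack_mult[of qC C no n VC2 m] C VC2' vstack_zero[of qC no m]
      unfolding Cs_def k_def by simp
    from vstack_eqD[OF this j] have c2: "C j * VC2 = 0\<^sub>m no m" using Cj VC2' by simp
    have "C j * V = C j * V1 + C j * (VC2 * Z)"
      unfolding V_def using mult_add_distrib_mat[OF Cj(1) V1c, of "VC2 * Z"] VC2' Zc by simp
    also have "C j * (VC2 * Z) = 0\<^sub>m no r"
      unfolding assoc_mult_mat[OF Cj(1) VC2' Zc, symmetric] c2 using Zc by simp
    finally show "Ch j = C j * V" using c1 Cj by simp
  qed
  show ?thesis using Vc Wc Apart Bpart Cpart by blast
qed

end
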